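(* Let $l,m$ be integers with $|l|>m>0$, let $d=\gcd(l,m)$ and write $l=l_1d$, $m=m_1d$. Let $h\in H(l,m)$ be written as $h=b^{p}v$ with $p\in\mathbb Z$ and $v\in L$. Let $r,s$ be integers. Then $h^{-1}a^{r}h=a^{s}$ holds if and only if $v\in C(a^{s})$ and one of the following holds: $p=0$ and $r=s$; or $p>0$ and $r=l_1^{p}dx$, $s=m_1^{p}dx$ for some integer $x$; or $p<0$ and $r=m_1^{-p}dx$, $s=l_1^{-p}dx$ for some integer $x$.
   Context: $H(l,m)=\langle a,b \mid b^{-1}a^{l}b=a^{m}\rangle$ (Baumslag–Solitar group). $L$ denotes the normal closure of $a$ in $H(l,m)$ (equivalently, the set of elements represented by words in $a,b$ with exponent sum $0$ in $b$); every element of $H(l,m)$ can be written uniquely as $b^p v$ with $p\in\mathbb Z$, $v\in L$. $C(h)$ denotes the centralizer of $h$ in $H(l,m)$. *)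

theory Defs
  imports Main
begin

text \<open>The Baumslag--Solitar group H(l,m) = < a, b | b^-1 a^l b = a^m >, modelled as
  words over the letters a, b and their inverses, modulo the congruence generated by
  free cancellation and the defining relation.  Group elements are equivalence classes;
  the product is concatenation, the inverse is formal inversion of words.\<close>

datatype gen = GA | GB

type_synonym letter = "gen \<times> bool"   \<comment> \<open>True = inverse letter\<close>
type_synonym word = "letter list"

definition linv :: "letter \<Rightarrow> letter" where
  "linv x = (fst x, \<not> snd x)"

definition winv :: "word \<Rightarrow> word" where
  "winv w = rev (map linv w)"

definition gpow :: "gen \<Rightarrow> int \<Rightarrow> word" where
  "gpow g k = (if 0 \<le> k then replicate (nat k) (g, False) else replicate (nat (- k)) (g, True))"

abbreviation apow :: "int \<Rightarrow> word" where "apow k \<equiv> gpow GA k"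
abbreviation bpow :: "int \<Rightarrow> word" where "bpow k \<equiv> gpow GB k"

inductive bs_eq :: "int \<Rightarrow> int \<Rightarrow> word \<Rightarrow> word \<Rightarrow> bool" for l m where
  refl: "bs_eq l m w w"
| sym: "bs_eq l m u w \<Longrightarrow> bs_eq l m w u"
| trans: "bs_eq l m u v \<Longrightarrow> bs_eq l m v w \<Longrightarrow> bs_eq l m u w"
| cancel: "bs_eq l m (u @ [x, linv x] @ w) (u @ w)"
| rel: "bs_eq l m (u @ bpow (-1) @ apow l @ bpow 1 @ w) (u @ apow m @ w)"

text \<open>Exponent sum in b of a word (the elements of L are those with b-exponent sum 0).\<close>
definition bexp :: "word \<Rightarrow> int" where
  "bexp w = sum_list (map (\<lambda>x. if fst x = GB then (if snd x then -1 else 1) else 0) w)"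

definition in_centralizer :: "int \<Rightarrow> int \<Rightarrow> word \<Rightarrow> word \<Rightarrow> bool" where
  "in_centralizer l m g v \<longleftrightarrow> bs_eq l m (v @ g) (g @ v)"

end

theory Submission
  imports Defs Complex_Main
begin


lemma bs_cong: "bs_eq l m u w \<Longrightarrow> bs_eq l m (xs @ u @ ys) (xs @ w @ ys)"
proof (induction rule: bs_eq.induct)
  case (refl w) then show ?case by (rule bs_eq.refl)
next
  case (sym u w) show ?case by (rule bs_eq.sym[OF sym.IH])
next
  case (trans u v w) then show ?case by (metis bs_eq.trans)
next
  case (cancel u a w)
  have "bs_eq l m ((xs @ u) @ [a, linv a] @ (w @ ys)) ((xs @ u) @ (w @ ys))" by (rule bs_eq.cancel)
  then show ?case by simp
next
  case (rel u w)
  have "bs_eq l m ((xs @ u) @ bpow (-1) @ apow l @ bpow 1 @ (w @ ys)) ((xs @ u) @ apow m @ (w @ ys))" by (rule bs_eq.rel)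
  then show ?case by simp
qed

declare bs_eq.trans[trans]

lemma bs_congL: "bs_eq l m u w \<Longrightarrow> bs_eq l m (xs @ u) (xs @ w)"
  using bs_cong[of l m u w xs "[]"] by simp
lemma bs_congR: "bs_eq l m u w \<Longrightarrow> bs_eq l m (u @ ys) (w @ ys)"
  using bs_cong[of l m u w "[]" ys] by simp

lemma linv_linv[simp]: "linv (linv a) = a" by (simp add: linv_def)
lemma winv_Nil[simp]: "winv [] = []" by (simp add: winv_def)
lemma winv_Cons[simp]: "winv (a # w) = winv w @ [linv a]" by (simp add: winv_def)
lemma winv_append[simp]: "winv (u @ w) = winv w @ winv u" by (simp add: winv_def)

lemma inv_right: "bs_eq l m (w @ winv w) []"
proof (induction w)
  case Nil then show ?case by (simp add: bs_eq.refl)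
next
  case (Cons a w)
  have "bs_eq l m (a # w @ winv w @ [linv a]) [a, linv a]"
    using bs_cong[OF Cons, of "[a]" "[linv a]"] by simp
  also have "bs_eq l m [a, linv a] []" using bs_eq.cancel[of l m "[]" a "[]"] by simp
  finally show ?case by simp
qed

lemma inv_left: "bs_eq l m (winv w @ w) []"
proof (induction w)
  case Nil then show ?case by (simp add: bs_eq.refl)
next
  case (Cons a w)
  have "bs_eq l m (winv w @ [linv a, linv (linv a)] @ w) (winv w @ w)" by (rule bs_eq.cancel)
  then have "bs_eq l m (winv (a # w) @ (a # w)) (winv w @ w)" by simp
  then show ?case using Cons bs_eq.trans by blast
qed

lemma winv_cong: assumes "bs_eq l m u w" shows "bs_eq l m (winv u) (winv w)"
proof -
  have "bs_eq l m (winv u) (winv u @ w @ winv w)" using bs_congL[OF bs_eq.sym[OF inv_right[of l m w]], of "winv u"] by simp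
  also have "bs_eq l m (winv u @ w @ winv w) (winv u @ u @ winv w)" using bs_cong[OF bs_eq.sym[OF assms]] .
  also have "bs_eq l m (winv u @ u @ winv w) (winv w)" using bs_congR[OF inv_left, of l m u "winv w"] by simp
  finally show ?thesis .
qed

lemma gpow_nonneg: "0 \<le> k \<Longrightarrow> gpow g k = replicate (nat k) (g, False)" by (simp add: gpow_def)
lemma gpow_neg: "k < 0 \<Longrightarrow> gpow g k = replicate (nat (-k)) (g, True)" by (simp add: gpow_def)
lemma gpow_0[simp]: "gpow g 0 = []" by (simp add: gpow_def)

lemma gpow_succ: "bs_eq l m (gpow g i @ gpow g 1) (gpow g (i+1))"
proof (cases "i \<ge> 0")
  case True
  then have "nat (i+1) = Suc (nat i)" by simp
  then show ?thesis using True by (simp add: gpow_def replicate_append_same bs_eq.refl)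
next
  case False
  define k where "k = nat (-(i+1))"
  have k: "nat (-i) = Suc k" "nat (-(i+1)) = k" using False unfolding k_def by auto
  have "bs_eq l m (replicate k (g,True) @ [(g,True), linv (g,True)] @ []) (replicate k (g,True) @ [])"
    by (rule bs_eq.cancel)
  moreover have "gpow g i @ gpow g 1 = replicate k (g,True) @ [(g,True), linv (g,True)] @ []"
    using False k by (simp add: gpow_def linv_def replicate_append_same[symmetric])
  moreover have "gpow g (i+1) = replicate k (g,True)"
    using False k by (auto simp add: gpow_def)
  ultimately show ?thesis by simp
qed

lemma gpow_pred: "bs_eq l m (gpow g i @ gpow g (-1)) (gpow g (i-1))"
proof (cases "i \<le> 0")
  case True
  then have "nat (-(i-1)) = Suc (nat (-i))" by simp
  then show ?thesis using True by (simp add: gpow_def replicate_append_same bs_eq.refl)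
next
  case False
  define k where "k = nat (i-1)"
  have k: "nat i = Suc k" "nat (i-1) = k" using False unfolding k_def by auto
  have "bs_eq l m (replicate k (g,False) @ [(g,False), linv (g,False)] @ []) (replicate k (g,False) @ [])"
    by (rule bs_eq.cancel)
  moreover have "gpow g i @ gpow g (-1) = replicate k (g,False) @ [(g,False), linv (g,False)] @ []"
    using False k by (simp add: gpow_def linv_def replicate_append_same[symmetric])
  moreover have "gpow g (i-1) = replicate k (g,False)"
    using False k by (auto simp add: gpow_def)
  ultimately show ?thesis by simp
qed

lemma gpow_add: "bs_eq l m (gpow g i @ gpow g j) (gpow g (i+j))"
proof (induction j rule: int_induct[where k=0])
  case base then show ?case by (simp add: bs_eq.refl)
next
  case (step1 j)
  have "bs_eq l m (gpow g i @ gpow g (j+1)) (gpow g i @ (gpow g j @ gpow g 1))"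
    using bs_congL[OF bs_eq.sym[OF gpow_succ]] .
  also have "bs_eq l m (gpow g i @ gpow g j @ gpow g 1) (gpow g (i+j) @ gpow g 1)"
    using bs_congR[OF step1(2)] by simp
  also have "bs_eq l m (gpow g (i+j) @ gpow g 1) (gpow g (i+j+1))" by (rule gpow_succ)
  finally show ?case by (simp add: add.assoc)
next
  case (step2 j)
  have "bs_eq l m (gpow g i @ gpow g (j-1)) (gpow g i @ (gpow g j @ gpow g (-1)))"
    using bs_congL[OF bs_eq.sym[OF gpow_pred]] .
  also have "bs_eq l m (gpow g i @ gpow g j @ gpow g (-1)) (gpow g (i+j) @ gpow g (-1))"
    using bs_congR[OF step2(2)] by simp
  also have "bs_eq l m (gpow g (i+j) @ gpow g (-1)) (gpow g (i+j-1))" by (rule gpow_pred)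
  finally show ?case by (simp add: algebra_simps)
qed

lemma winv_replicate: "winv (replicate n a) = replicate n (linv a)"
  by (induction n) (auto simp: replicate_append_same)

lemma winv_gpow[simp]: "winv (gpow g k) = gpow g (-k)"
  by (auto simp: gpow_def winv_replicate linv_def)



locale bsl = fixes l m :: int assumes lm: "\<bar>l\<bar> > m" and mpos: "m > 0"
begin

lemma lnz: "l \<noteq> 0" using lm mpos by auto

lemma lsgn: "l * sgn l = \<bar>l\<bar>" by (simp add: abs_if sgn_if)
lemma lsgn': "sgn l * l = \<bar>l\<bar>" by (simp add: abs_if sgn_if)

definition MM :: "bool \<Rightarrow> int" where "MM e = (if e then \<bar>l\<bar> else m)"
definition fac :: "bool \<Rightarrow> int" where "fac e = (if e then sgn l * m else l)"

lemma MM_pos: "MM e > 0" using lm mpos by (auto simp: MM_def)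

fun acta :: "int \<Rightarrow> (bool \<times> int) list \<Rightarrow> (bool \<times> int) list" where
  "acta k [] = []"
| "acta k ((e,x)#xs) = (e, (x+k) mod MM e) # acta (((x+k) div MM e) * fac e) xs"

fun nf :: "(bool \<times> int) list \<Rightarrow> bool" where
  "nf [] = True"
| "nf ((e,x)#xs) = (0 \<le> x \<and> x < MM e \<and> nf xs \<and>
     (case xs of [] \<Rightarrow> True | (e',x')#_ \<Rightarrow> (e' \<noteq> e \<longrightarrow> x' \<noteq> 0)))"

fun ht :: "(bool \<times> int) list \<Rightarrow> int" where
  "ht [] = 0"
| "ht ((e,x)#xs) = (if e then 1 else -1) + ht xs"

definition bu :: "(bool \<times> int) list \<Rightarrow> (bool \<times> int) list" where
  "bu xs = (if xs \<noteq> [] \<and> hd xs = (False, 0) then tl xs else (True, 0) # xs)"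
definition bd :: "(bool \<times> int) list \<Rightarrow> (bool \<times> int) list" where
  "bd xs = (if xs \<noteq> [] \<and> hd xs = (True, 0) then tl xs else (False, 0) # xs)"

definition actL :: "letter \<Rightarrow> (bool \<times> int) list \<Rightarrow> (bool \<times> int) list" where
  "actL a = (if fst a = GA then acta (if snd a then -1 else 1) else if snd a then bd else bu)"

fun actT :: "word \<Rightarrow> (bool \<times> int) list \<Rightarrow> (bool \<times> int) list" where
  "actT [] y = y"
| "actT (a#w) y = actL a (actT w y)"

lemma actT_append: "actT (u @ w) y = actT u (actT w y)"
  by (induction u) auto

lemma div_split: "(a + j) div (M::int) = a div M + (a mod M + j) div M" if "M > 0"
proof -
  have "a + j = (a mod M + j) + (a div M) * M" by simp
  then have "(a + j) div M = ((a mod M + j) + (a div M) * M) div M" by simp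
  also have "\<dots> = a div M + (a mod M + j) div M" using that by (subst div_mult_self1) auto
  finally show ?thesis .
qed

lemma acta_add: "acta j (acta k xs) = acta (k + j) xs"
proof (induction xs arbitrary: j k)
  case Nil then show ?case by simp
next
  case (Cons a xs)
  obtain e x where a: "a = (e,x)" by fastforce
  have M: "MM e > 0" by (rule MM_pos)
  have "((x + k) div MM e) * fac e + (((x + k) mod MM e + j) div MM e) * fac e
        = ((x + (k + j)) div MM e) * fac e"
    using div_split[OF M, of "x+k" j] by (simp add: algebra_simps)
  then show ?case using Cons a by (simp add: mod_add_left_eq add.assoc)
qed

lemma acta_zero: "nf xs \<Longrightarrow> acta 0 xs = xs"
proof (induction xs)
  case Nil then show ?case by simp
next
  case (Cons a xs)
  obtain e x where a: "a = (e,x)" by fastforce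
  then show ?case using Cons by simp
qed

lemma acta_hd: "acta c ((e',x')#ys) = (e', (x'+c) mod MM e') # acta (((x'+c) div MM e') * fac e') ys"
  by simp

lemma carry_keep: assumes "e' \<noteq> e" "0 \<le> x'" "x' < MM e'"
  shows "(x' + q * fac e) mod MM e' = x'"
proof (cases e)
  case True
  then have "e' = False" using assms by auto
  then have "(x' + q * fac e) mod MM e' = (x' + (q * sgn l) * m) mod m" using True by (simp add: MM_def fac_def algebra_simps)
  also have "\<dots> = x' mod m" by simp
  also have "\<dots> = x'" using assms \<open>e' = False\<close> by (simp add: MM_def)
  finally show ?thesis .
next
  case False
  then have "e' = True" using assms by auto
  have "l mod \<bar>l\<bar> = 0" by (simp add: abs_if)
  then have "(x' + q * fac e) mod MM e' = (x' + q * l) mod \<bar>l\<bar>" using False \<open>e' = True\<close> by (simp add: MM_def fac_def)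
  also have "\<dots> = (x' + (q * sgn l) * \<bar>l\<bar>) mod \<bar>l\<bar>" by (simp add: sgn_mult_abs mult.assoc)
  also have "\<dots> = x' mod \<bar>l\<bar>" by (rule mod_mult_self1)
  also have "\<dots> = x'" using assms \<open>e' = True\<close> by (simp add: MM_def)
  finally show ?thesis .
qed

lemma acta_nf: "nf xs \<Longrightarrow> nf (acta k xs)"
proof (induction xs arbitrary: k)
  case Nil then show ?case by simp
next
  case (Cons a xs)
  obtain e x where a: "a = (e,x)" by fastforce
  have M: "MM e > 0" by (rule MM_pos)
  have tl: "nf (acta (((x+k) div MM e) * fac e) xs)" using Cons a by simp
  have cnd: "case acta (((x+k) div MM e) * fac e) xs of [] \<Rightarrow> True | (e',x')#_ \<Rightarrow> (e' \<noteq> e \<longrightarrow> x' \<noteq> 0)"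
  proof (cases xs)
    case Nil then show ?thesis by simp
  next
    case (Cons b ys)
    obtain e' x' where b: "b = (e',x')" by fastforce
    have h: "0 \<le> x'" "x' < MM e'" "e' \<noteq> e \<longrightarrow> x' \<noteq> 0" using Cons b \<open>nf (a#xs)\<close> a by auto
    show ?thesis
    proof (cases "e' = e")
      case True then show ?thesis using Cons b by simp
    next
      case False
      have "(x' + ((x+k) div MM e) * fac e) mod MM e' = x'" using carry_keep[OF False h(1,2)] .
      then show ?thesis using Cons b h False by simp
    qed
  qed
  show ?case using a tl cnd M by simp
qed


lemma nf_tl: "nf (a#xs) \<Longrightarrow> nf xs"
  by (cases a) auto

lemma bu_nf: "nf xs \<Longrightarrow> nf (bu xs)"
proof (cases xs)
  case Nil then show ?thesis using MM_pos[of True] by (simp add: bu_def)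
next
  case (Cons a ys)
  obtain e x where a: "a = (e,x)" by fastforce
  assume n: "nf xs"
  show ?thesis
  proof (cases "a = (False, 0)")
    case True then show ?thesis using n Cons by (simp add: bu_def nf_tl)
  next
    case False then show ?thesis using n Cons a MM_pos[of True] by (auto simp add: bu_def)
  qed
qed

lemma bd_nf: "nf xs \<Longrightarrow> nf (bd xs)"
proof (cases xs)
  case Nil then show ?thesis using MM_pos[of False] by (simp add: bd_def)
next
  case (Cons a ys)
  obtain e x where a: "a = (e,x)" by fastforce
  assume n: "nf xs"
  show ?thesis
  proof (cases "a = (True, 0)")
    case True then show ?thesis using n Cons by (simp add: bd_def nf_tl)
  next
    case False then show ?thesis using n Cons a MM_pos[of False] by (auto simp add: bd_def)
  qed
qed

lemma bd_bu: "nf xs \<Longrightarrow> bd (bu xs) = xs"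
proof (cases xs)
  case Nil then show ?thesis by (simp add: bu_def bd_def)
next
  case (Cons a ys)
  assume n: "nf xs"
  show ?thesis
  proof (cases "a = (False, 0)")
    case True
    then have "ys = [] \<or> hd ys \<noteq> (True, 0)" using n Cons by (cases ys) auto
    then show ?thesis using True Cons by (auto simp add: bu_def bd_def)
  next
    case False then show ?thesis using Cons by (simp add: bu_def bd_def)
  qed
qed

lemma bu_bd: "nf xs \<Longrightarrow> bu (bd xs) = xs"
proof (cases xs)
  case Nil then show ?thesis by (simp add: bu_def bd_def)
next
  case (Cons a ys)
  assume n: "nf xs"
  show ?thesis
  proof (cases "a = (True, 0)")
    case True
    then have "ys = [] \<or> hd ys \<noteq> (False, 0)" using n Cons by (cases ys) auto
    then show ?thesis using True Cons by (auto simp add: bu_def bd_def)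
  next
    case False then show ?thesis using Cons by (simp add: bu_def bd_def)
  qed
qed

lemma actL_nf: "nf xs \<Longrightarrow> nf (actL a xs)"
  by (auto simp: actL_def acta_nf bu_nf bd_nf)

lemma actT_nf: "nf xs \<Longrightarrow> nf (actT w xs)"
  by (induction w) (auto simp: actL_nf)

lemma linv_cases: "linv (g, b) = (g, \<not> b)" by (simp add: linv_def)

lemma actL_cancel: "nf xs \<Longrightarrow> actL a (actL (linv a) xs) = xs"
proof -
  assume n: "nf xs"
  obtain g b where a: "a = (g, b)" by fastforce
  show ?thesis
  proof (cases g)
    case GA then show ?thesis using a n by (auto simp: actL_def linv_def acta_add acta_zero)
  next
    case GB then show ?thesis using a n by (auto simp: actL_def linv_def bd_bu bu_bd)
  qed
qed

lemma gpow_m1: "gpow g (-1) = [(g, True)]" by (simp add: gpow_def)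
lemma gpow_1: "gpow g 1 = [(g, False)]" by (simp add: gpow_def)

lemma actT_apow_nat: "nf xs \<Longrightarrow> actT (replicate n (GA, False)) xs = acta (int n) xs"
  by (induction n) (auto simp: acta_zero actL_def acta_add add.commute)

lemma actT_apow_nat': "nf xs \<Longrightarrow> actT (replicate n (GA, True)) xs = acta (- int n) xs"
proof (induction n)
  case 0 then show ?case by (simp add: acta_zero)
next
  case (Suc n)
  have e: "- int n - 1 = - int (Suc n)" by simp
  have "actT (replicate (Suc n) (GA,True)) xs = acta (- int n - 1) xs" using Suc by (simp add: actL_def acta_add)
  then show ?case by (simp only: e)
qed

lemma actT_apow: "nf xs \<Longrightarrow> actT (apow k) xs = acta k xs"
  by (auto simp: gpow_def actT_apow_nat actT_apow_nat')

lemma acta_keep_hd: assumes "nf ys" "ys = [] \<or> hd ys \<noteq> (True, 0)"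
  shows "acta (q * l) ys = [] \<or> hd (acta (q * l) ys) \<noteq> (True, 0)"
proof (cases ys)
  case Nil then show ?thesis by simp
next
  case (Cons b zs)
  obtain e x where b: "b = (e,x)" by fastforce
  show ?thesis
  proof (cases e)
    case True
    have "(x + q * l) mod \<bar>l\<bar> = (x + (q * sgn l) * \<bar>l\<bar>) mod \<bar>l\<bar>" by (simp add: sgn_mult_abs mult.assoc)
    also have "\<dots> = x mod \<bar>l\<bar>" by (rule mod_mult_self1)
    also have "\<dots> = x" using assms Cons b True by (simp add: MM_def)
    finally show ?thesis using assms Cons b True by (simp add: MM_def)
  next
    case False then show ?thesis using Cons b by simp
  qed
qed

lemma rel_act: assumes n: "nf xs" shows "bd (acta l (bu xs)) = acta m xs"
proof (cases "xs \<noteq> [] \<and> hd xs = (False, 0)")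
  case True
  then obtain ys where ys: "xs = (False, 0) # ys" by (cases xs) auto
  have nys: "nf ys" "ys = [] \<or> hd ys \<noteq> (True, 0)" using n ys by (cases ys; auto)+
  have "acta l ys = [] \<or> hd (acta l ys) \<noteq> (True, 0)" using acta_keep_hd[OF nys, of 1] by simp
  then have "bd (acta l ys) = (False, 0) # acta l ys" by (auto simp: bd_def)
  moreover have "acta m xs = (False, 0) # acta l ys" using ys mpos by (simp add: MM_def fac_def)
  ultimately show ?thesis using ys by (simp add: bu_def)
next
  case False
  then have h1: "bu xs = (True, 0) # xs" unfolding bu_def by auto
  have h2: "l mod \<bar>l\<bar> = 0" by (simp add: abs_if)
  have h3: "(l div \<bar>l\<bar>) * (sgn l * m) = m"
  proof -
    have "l div \<bar>l\<bar> = (sgn l * \<bar>l\<bar>) div \<bar>l\<bar>" by (simp add: sgn_mult_abs)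
    also have "\<dots> = sgn l" using lnz by simp
    finally show ?thesis using lnz by (simp add: sgn_if)
  qed
  have "acta l ((True, 0) # xs) = (True, 0) # acta m xs"
    by (simp only: acta.simps MM_def fac_def if_True add_0 h2 h3)
  then show ?thesis by (simp add: h1 bd_def)
qed

lemma actT_inv: "bs_eq l m u w \<Longrightarrow> nf y \<Longrightarrow> actT u y = actT w y"
proof (induction arbitrary: y rule: bs_eq.induct)
  case (refl w) then show ?case by simp
next
  case (sym u w) then show ?case by simp
next
  case (trans u v w) then show ?case by simp
next
  case (cancel u a w)
  then show ?case by (simp add: actT_append actL_cancel actT_nf)
next
  case (rel u w)
  have n: "nf (actT w y)" using rel actT_nf by simp
  have "actT (bpow (-1) @ apow l @ bpow 1) (actT w y) = bd (actT (apow l) (bu (actT w y)))"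
    by (simp add: actT_append gpow_m1 gpow_1 actL_def)
  also have "\<dots> = bd (acta l (bu (actT w y)))" using actT_apow[OF bu_nf[OF n]] by simp
  also have "\<dots> = acta m (actT w y)" using rel_act[OF n] .
  also have "\<dots> = actT (apow m) (actT w y)" using actT_apow[OF n] by simp
  finally show ?case by (simp add: actT_append)
qed

lemma gen_neq[simp]: "g \<noteq> GB \<longleftrightarrow> g = GA" by (cases g) auto

lemma ht_acta: "ht (acta k xs) = ht xs"
proof (induction xs arbitrary: k)
  case Nil then show ?case by simp
next
  case (Cons a xs) then show ?case by (cases a) simp
qed

lemma ht_bu: "ht (bu xs) = ht xs + 1"
  by (cases xs) (auto simp: bu_def)
lemma ht_bd: "ht (bd xs) = ht xs - 1"
  by (cases xs) (auto simp: bd_def)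

lemma ht_actT: "ht (actT w xs) = ht xs + bexp w"
  by (induction w) (auto simp: bexp_def actL_def ht_acta ht_bu ht_bd gen_neq)


lemma mod_fix: assumes "(x + r) mod M = x" "0 \<le> x" "x < (M::int)"
  shows "\<exists>t. r = M * t \<and> (x + r) div M = t"
proof -
  have "x mod M = x" using assms by simp
  then have "(x + r) mod M = x mod M" using assms by simp
  then have "M dvd (x + r) - x" by (simp add: mod_eq_dvd_iff)
  then obtain t where t: "r = M * t" by auto
  have "(x + M * t) div M = t" using assms by simp
  then show ?thesis using t by auto
qed

lemma fix_up: "nf xs \<Longrightarrow> acta r xs = xs \<Longrightarrow> int j < ht xs \<Longrightarrow> l ^ Suc j dvd r * m ^ j"
proof (induction xs arbitrary: r j)
  case Nil then show ?case by simp
next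
  case (Cons a xs)
  obtain e x where a: "a = (e,x)" by fastforce
  have h: "(x + r) mod MM e = x" "acta (((x + r) div MM e) * fac e) xs = xs"
    using Cons.prems a by auto
  have b: "0 \<le> x" "x < MM e" "nf xs" using Cons.prems a by auto
  obtain t where t: "r = MM e * t" "(x + r) div MM e = t" using mod_fix[OF h(1) b(1,2)] by blast
  have fx: "acta (t * fac e) xs = xs" using h(2) t by simp
  show ?case
  proof (cases e)
    case True
    have cl: "t * fac e * l = r * m" using True t by (simp add: MM_def fac_def algebra_simps lsgn mult.left_commute[of "sgn l"])
    show ?thesis
    proof (cases j)
      case 0
      have "l dvd r" using True t by (simp add: MM_def)
      then show ?thesis using 0 by simp
    next
      case (Suc j')
      have "int j' < ht xs" using Cons.prems(3) a True Suc by simp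
      then have ih: "l ^ Suc j' dvd (t * fac e) * m ^ j'" using Cons.IH[OF b(3) fx] by blast
      have "l * l ^ Suc j' dvd l * ((t * fac e) * m ^ j')" using ih by (rule mult_dvd_mono[OF dvd_refl])
      moreover have "l * ((t * fac e) * m ^ j') = r * m ^ j" using cl Suc by (simp add: algebra_simps)
      ultimately show ?thesis using Suc by simp
    qed
  next
    case False
    have cl: "t * fac e * m = r * l" using False t by (simp add: MM_def fac_def algebra_simps)
    have "int (Suc j) < ht xs" using Cons.prems(3) a False by simp
    then have ih: "l ^ Suc (Suc j) dvd (t * fac e) * m ^ Suc j" using Cons.IH[OF b(3) fx] by blast
    have "(t * fac e) * m ^ Suc j = (t * fac e * m) * m ^ j" by (simp add: mult.assoc)
    also have "\<dots> = l * (r * m ^ j)" by (simp only: cl) (simp add: ac_simps)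
    finally have E: "(t * fac e) * m ^ Suc j = l * (r * m ^ j)" .
    have "l * l ^ Suc j dvd l * (r * m ^ j)" using ih unfolding E power_Suc[of l "Suc j"] .
    then show ?thesis using lnz by simp
  qed
qed

lemma fix_down: "nf xs \<Longrightarrow> acta r xs = xs \<Longrightarrow> int j < - ht xs \<Longrightarrow> m ^ Suc j dvd r * l ^ j"
proof (induction xs arbitrary: r j)
  case Nil then show ?case by simp
next
  case (Cons a xs)
  obtain e x where a: "a = (e,x)" by fastforce
  have h: "(x + r) mod MM e = x" "acta (((x + r) div MM e) * fac e) xs = xs"
    using Cons.prems a by auto
  have b: "0 \<le> x" "x < MM e" "nf xs" using Cons.prems a by auto
  obtain t where t: "r = MM e * t" "(x + r) div MM e = t" using mod_fix[OF h(1) b(1,2)] by blast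
  have fx: "acta (t * fac e) xs = xs" using h(2) t by simp
  show ?case
  proof (cases e)
    case True
    have cl: "t * fac e * l = r * m" using True t by (simp add: MM_def fac_def algebra_simps lsgn mult.left_commute[of "sgn l"])
    have "int (Suc j) < - ht xs" using Cons.prems(3) a True by simp
    then have ih: "m ^ Suc (Suc j) dvd (t * fac e) * l ^ Suc j" using Cons.IH[OF b(3) fx] by blast
    have "(t * fac e) * l ^ Suc j = (t * fac e * l) * l ^ j" by (simp add: mult.assoc)
    also have "\<dots> = m * (r * l ^ j)" by (simp only: cl) (simp add: ac_simps)
    finally have E: "(t * fac e) * l ^ Suc j = m * (r * l ^ j)" .
    have "m * m ^ Suc j dvd m * (r * l ^ j)" using ih unfolding E power_Suc[of m "Suc j"] .
    then show ?thesis using mpos by simp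
  next
    case False
    have cl: "t * fac e * m = r * l" using False t by (simp add: MM_def fac_def algebra_simps)
    show ?thesis
    proof (cases j)
      case 0
      have "m dvd r" using False t by (simp add: MM_def)
      then show ?thesis using 0 by simp
    next
      case (Suc j')
      have "int j' < - ht xs" using Cons.prems(3) a False Suc by simp
      then have ih: "m ^ Suc j' dvd (t * fac e) * l ^ j'" using Cons.IH[OF b(3) fx] by blast
      have "m * m ^ Suc j' dvd m * ((t * fac e) * l ^ j')" using ih by (rule mult_dvd_mono[OF dvd_refl])
      moreover have "m * ((t * fac e) * l ^ j') = r * l ^ j" using cl Suc by (simp add: algebra_simps)
      ultimately show ?thesis using Suc by simp
    qed
  qed
qed

definition cq :: rat where "cq = of_int l / of_int m"

lemma cq_nz: "cq \<noteq> 0" using lnz mpos by (simp add: cq_def)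

definition actQL :: "letter \<Rightarrow> rat \<Rightarrow> rat" where
  "actQL a x = (if fst a = GA then (if snd a then x - 1 else x + 1) else (if snd a then x / cq else x * cq))"

fun actQ :: "word \<Rightarrow> rat \<Rightarrow> rat" where
  "actQ [] x = x"
| "actQ (a # w) x = actQL a (actQ w x)"

lemma actQ_append: "actQ (u @ w) x = actQ u (actQ w x)"
  by (induction u) auto

lemma actQ_rep1: "actQ (replicate n (GA, False)) x = x + of_nat n"
  by (induction n) (auto simp: actQL_def)
lemma actQ_rep2: "actQ (replicate n (GA, True)) x = x - of_nat n"
  by (induction n) (auto simp: actQL_def)

lemma actQ_apow: "actQ (apow k) x = x + of_int k"
  by (auto simp: gpow_def actQ_rep1 actQ_rep2)

lemma actQL_cancel: "actQL a (actQL (linv a) x) = x"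
  using cq_nz by (cases a) (auto simp: actQL_def linv_def)

lemma actQ_inv: "bs_eq l m u w \<Longrightarrow> actQ u x = actQ w x"
proof (induction arbitrary: x rule: bs_eq.induct)
  case (refl w) then show ?case by simp
next
  case (sym u w) then show ?case by simp
next
  case (trans u v w) then show ?case by simp
next
  case (cancel u a w)
  then show ?case by (simp add: actQ_append actQL_cancel)
next
  case (rel u w)
  have "actQ (bpow (-1) @ apow l @ bpow 1) y = actQ (apow m) y" for y
  proof -
    have "actQ (bpow (-1) @ apow l @ bpow 1) y = (y * cq + of_int l) / cq"
      by (simp add: actQ_append actQ_apow gpow_m1 gpow_1 actQL_def)
    also have "\<dots> = y + of_int m" using cq_nz lnz mpos by (simp add: cq_def field_simps)
    finally show ?thesis by (simp add: actQ_apow)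
  qed
  then show ?case by (simp add: actQ_append)
qed

lemma bexp_Cons: "bexp (a # w) = (if fst a = GB then (if snd a then -1 else 1) else 0) + bexp w"
  by (simp add: bexp_def)

lemma actQ_lin: "actQ w x = actQ w 0 + cq powi (bexp w) * x"
proof (induction w arbitrary: x)
  case Nil then show ?case by (simp add: bexp_def)
next
  case (Cons a w)
  obtain g b where a: "a = (g, b)" by fastforce
  show ?case
  proof (cases g)
    case GA then show ?thesis using Cons.IH[of x] a by (auto simp: actQL_def bexp_Cons)
  next
    case GB
    show ?thesis
    proof (cases b)
      case True
      have "cq powi (-1 + bexp w) = cq powi (bexp w) / cq"
        using power_int_diff[of cq "bexp w" 1] cq_nz by (simp add: add.commute)
      have "actQ (a#w) x = (actQ w 0 + cq powi bexp w * x) / cq" using Cons.IH[of x] a GB True by (simp add: actQL_def)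
      also have "\<dots> = actQ w 0 / cq + (cq powi bexp w / cq) * x" by (simp add: add_divide_distrib)
      also have "\<dots> = actQ (a#w) 0 + cq powi (bexp (a#w)) * x"
        using a GB True \<open>cq powi (-1 + bexp w) = cq powi (bexp w) / cq\<close> by (simp add: actQL_def bexp_Cons)
      finally show ?thesis .
    next
      case False
      have "cq powi (1 + bexp w) = cq powi (bexp w) * cq"
        using power_int_add_1[of cq "bexp w"] cq_nz by (simp add: add.commute)
      have "actQ (a#w) x = (actQ w 0 + cq powi bexp w * x) * cq" using Cons.IH[of x] a GB False by (simp add: actQL_def)
      also have "\<dots> = actQ w 0 * cq + (cq powi bexp w * cq) * x" by (simp add: algebra_simps)
      also have "\<dots> = actQ (a#w) 0 + cq powi (bexp (a#w)) * x"
        using a GB False \<open>cq powi (1 + bexp w) = cq powi (bexp w) * cq\<close> by (simp add: actQL_def bexp_Cons)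
      finally show ?thesis .
    qed
  qed
qed

end


lemma bs_ins: "bs_eq l m u [] \<Longrightarrow> bs_eq l m (xs @ ys) (xs @ u @ ys)"
  using bs_cong[of l m u "[]" xs ys] bs_eq.sym by auto

lemma conj_nat: "bs_eq l m (bpow (-1) @ apow (l * int k) @ bpow 1) (apow (m * int k))"
proof (induction k)
  case 0
  have "bs_eq l m (winv (bpow 1) @ bpow 1) []" by (rule inv_left)
  then show ?case by simp
next
  case (Suc k)
  let ?B = "bpow 1" and ?Bi = "bpow (-1)"
  have "bs_eq l m (?Bi @ apow (l * int (Suc k)) @ ?B) (?Bi @ (apow (l * int k) @ apow l) @ ?B)"
    using bs_cong[OF bs_eq.sym[OF gpow_add[of l m GA "l * int k" l]], of ?Bi ?B] by (simp add: algebra_simps)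
  also have "bs_eq l m (?Bi @ (apow (l * int k) @ apow l) @ ?B) (?Bi @ apow (l * int k) @ ?B @ ?Bi @ apow l @ ?B)"
    using bs_ins[OF gpow_add[of l m GB 1 "-1", simplified], of "?Bi @ apow (l * int k)" "apow l @ ?B"] by simp
  also have "bs_eq l m (?Bi @ apow (l * int k) @ ?B @ ?Bi @ apow l @ ?B) (apow (m * int k) @ (?Bi @ apow l @ ?B))"
    using bs_congR[OF Suc, of "?Bi @ apow l @ ?B"] by simp
  also have "bs_eq l m (apow (m * int k) @ (?Bi @ apow l @ ?B)) (apow (m * int k) @ apow m)"
    using bs_congL[OF bs_eq.rel[of l m "[]" "[]", simplified]] .
  also have "bs_eq l m (apow (m * int k) @ apow m) (apow (m * int (Suc k)))"
    using gpow_add[of l m GA "m * int k" m] by (simp add: algebra_simps)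
  finally show ?case by simp
qed


lemma conj_int: "bs_eq l m (bpow (-1) @ apow (l * k) @ bpow 1) (apow (m * k))"
proof (cases "k \<ge> 0")
  case True
  then show ?thesis using conj_nat[of l m "nat k"] by simp
next
  case False
  define n where "n = nat (- k)"
  have n: "k = - int n" using False by (simp add: n_def)
  have "bs_eq l m (winv (bpow (-1) @ apow (l * int n) @ bpow 1)) (winv (apow (m * int n)))"
    by (rule winv_cong[OF conj_nat])
  then show ?thesis using n by simp
qed

lemma conj_pow: assumes "l = l1 * d" "m = m1 * d"
  shows "bs_eq l m (bpow (- int n) @ apow (l1 ^ n * d * x) @ bpow (int n)) (apow (m1 ^ n * d * x))"
proof (induction n arbitrary: x)
  case 0 then show ?case by (simp add: bs_eq.refl)
next
  case (Suc n)
  let ?B = "bpow 1" and ?Bi = "bpow (-1)"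
  have "bs_eq l m (bpow (- int (Suc n)) @ apow (l1 ^ Suc n * d * x) @ bpow (int (Suc n)))
      (?Bi @ bpow (- int n) @ apow (l1 ^ Suc n * d * x) @ bpow (int (Suc n)))"
    using bs_congR[OF bs_eq.sym[OF gpow_add[of l m GB "-1" "- int n"]], of "apow (l1 ^ Suc n * d * x) @ bpow (int (Suc n))"]
    by (simp add: algebra_simps)
  also have "bs_eq l m (?Bi @ bpow (- int n) @ apow (l1 ^ Suc n * d * x) @ bpow (int (Suc n)))
      (?Bi @ bpow (- int n) @ apow (l1 ^ Suc n * d * x) @ bpow (int n) @ ?B)"
    using bs_congL[OF bs_eq.sym[OF gpow_add[of l m GB "int n" 1]], of "?Bi @ bpow (- int n) @ apow (l1 ^ Suc n * d * x)"]
    by (simp add: algebra_simps)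
  also have "bs_eq l m (?Bi @ bpow (- int n) @ apow (l1 ^ Suc n * d * x) @ bpow (int n) @ ?B)
      (?Bi @ apow (l * (m1 ^ n * x)) @ ?B)"
  proof -
    have e1: "l1 ^ n * d * (l1 * x) = l1 ^ Suc n * d * x" by (simp add: algebra_simps)
    have e2: "m1 ^ n * d * (l1 * x) = l * (m1 ^ n * x)" using assms by (simp add: algebra_simps)
    have "bs_eq l m (bpow (- int n) @ apow (l1 ^ Suc n * d * x) @ bpow (int n)) (apow (l * (m1 ^ n * x)))"
      using Suc.IH[of "l1 * x"] unfolding e1 e2 .
    from bs_cong[OF this, of ?Bi ?B] show ?thesis by simp
  qed
  also have "bs_eq l m (?Bi @ apow (l * (m1 ^ n * x)) @ ?B) (apow (m1 ^ Suc n * d * x))"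
  proof -
    have e3: "m * (m1 ^ n * x) = m1 ^ Suc n * d * x" using assms by (simp add: algebra_simps)
    show ?thesis using conj_int[of l m "m1 ^ n * x"] unfolding e3 .
  qed
  finally show ?case .
qed

lemma conj_flip: assumes "bs_eq l m (winv u @ X @ u) Y" shows "bs_eq l m X (u @ Y @ winv u)"
proof -
  have "bs_eq l m X (u @ winv u @ X)" using bs_ins[OF inv_right[of l m u], of "[]" "X"] by simp
  also have "bs_eq l m (u @ winv u @ X) (u @ winv u @ X @ u @ winv u)"
    using bs_ins[OF inv_right[of l m u], of "u @ winv u @ X" "[]"] by simp
  also have "bs_eq l m (u @ winv u @ X @ u @ winv u) (u @ Y @ winv u)"
    using bs_cong[OF assms, of u "winv u"] by simp
  finally show ?thesis by simp
qed

lemma nt: fixes A B r s :: int and n :: nat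
  assumes A: "A \<noteq> 0" and B: "B \<noteq> 0" and n: "n \<ge> 1"
    and e: "r * B ^ n = s * A ^ n" and d1: "A dvd r" and d2: "A ^ n dvd r * B ^ (n - 1)"
  shows "\<exists>x. r = (A div gcd A B) ^ n * gcd A B * x \<and> s = (B div gcd A B) ^ n * gcd A B * x"
proof -
  define d where "d = gcd A B"
  define a1 where "a1 = A div d"
  define b1 where "b1 = B div d"
  have dpos: "d > 0" using A by (simp add: d_def)
  have Aeq: "A = a1 * d" by (simp add: a1_def d_def)
  have Beq: "B = b1 * d" by (simp add: b1_def d_def)
  have cop: "coprime a1 b1" using div_gcd_coprime[of A B] A by (simp add: a1_def b1_def d_def)
  have a1nz: "a1 \<noteq> 0" using A Aeq by auto
  have "(r * b1 ^ n) * d ^ n = (s * a1 ^ n) * d ^ n" using e Aeq Beq by (simp add: power_mult_distrib algebra_simps)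
  then have e1: "r * b1 ^ n = s * a1 ^ n" using dpos by simp
  have "a1 ^ n dvd r * b1 ^ n" using e1 by simp
  then have "a1 ^ n dvd r" using cop by (simp add: coprime_dvd_mult_left_iff)
  then obtain y where y: "r = a1 ^ n * y" by (auto elim: dvdE)
  have "a1 ^ n * (y * b1 ^ n) = a1 ^ n * s" using e1 y by (simp add: algebra_simps)
  then have sy: "s = y * b1 ^ n" using a1nz by simp
  obtain k where k: "n = Suc k" using n by (cases n) auto
  have "a1 * d dvd a1 * (a1 ^ k * y)" using d1 Aeq y k by (simp add: algebra_simps)
  then have dv1: "d dvd a1 ^ k * y" using a1nz by simp
  have "(a1 ^ n * d ^ k) * d dvd (a1 ^ n * d ^ k) * (y * b1 ^ k)"
    using d2 Aeq Beq y k by (simp add: power_mult_distrib algebra_simps)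
  then have dv2: "d dvd b1 ^ k * y" using a1nz dpos by (simp add: mult.commute)
  have "d dvd gcd (a1 ^ k * y) (b1 ^ k * y)" using dv1 dv2 by simp
  also have "gcd (a1 ^ k * y) (b1 ^ k * y) = normalize (gcd (b1 ^ k) (a1 ^ k) * y)" by (rule gcd_mult_right)
  also have "gcd (b1 ^ k) (a1 ^ k) = 1" using cop by (simp add: coprime_commute)
  finally have "d dvd y" by simp
  then obtain x where x: "y = d * x" by (auto elim: dvdE)
  show ?thesis using y sy x by (intro exI[of _ x]) (simp add: a1_def b1_def d_def algebra_simps)
qed


lemma bexp_append: "bexp (u @ w) = bexp u + bexp w" by (simp add: bexp_def)
lemma bexp_bpow: "bexp (bpow k) = k" by (simp add: bexp_def gpow_def sum_list_replicate)

lemma conj_h: assumes "bs_eq l m h (bpow p @ v)"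
  shows "bs_eq l m (winv h @ X @ h) (winv v @ bpow (-p) @ X @ bpow p @ v)"
proof -
  have "bs_eq l m (winv h @ X @ h) (winv h @ X @ bpow p @ v)" using bs_congL[OF assms, of "winv h @ X"] by simp
  also have "bs_eq l m (winv h @ X @ bpow p @ v) (winv (bpow p @ v) @ X @ bpow p @ v)"
    using bs_congR[OF winv_cong[OF assms], of "X @ bpow p @ v"] .
  finally show ?thesis by simp
qed

definition cond :: "int \<Rightarrow> int \<Rightarrow> int \<Rightarrow> int \<Rightarrow> int \<Rightarrow> bool" where
  "cond l m p r s \<longleftrightarrow> ((p = 0 \<and> r = s) \<or>
      (p > 0 \<and> (\<exists>x::int. r = (l div gcd l m) ^ nat p * gcd l m * x \<and>
                          s = (m div gcd l m) ^ nat p * gcd l m * x)) \<or>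
      (p < 0 \<and> (\<exists>x::int. r = (m div gcd l m) ^ nat (- p) * gcd l m * x \<and>
                          s = (l div gcd l m) ^ nat (- p) * gcd l m * x)))"

lemma cond_conj: assumes "cond l m p r s"
  shows "bs_eq l m (bpow (-p) @ apow r @ bpow p) (apow s)"
proof -
  have l: "l = (l div gcd l m) * gcd l m" and m: "m = (m div gcd l m) * gcd l m" by simp_all
  consider "p = 0 \<and> r = s" | "p > 0 \<and> (\<exists>x::int. r = (l div gcd l m) ^ nat p * gcd l m * x \<and>
                          s = (m div gcd l m) ^ nat p * gcd l m * x)" |
     "p < 0 \<and> (\<exists>x::int. r = (m div gcd l m) ^ nat (- p) * gcd l m * x \<and>
                          s = (l div gcd l m) ^ nat (- p) * gcd l m * x)"
    using assms unfolding cond_def by blast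
  then show ?thesis
  proof cases
    case 1 then show ?thesis by (simp add: bs_eq.refl)
  next
    case 2
    then obtain x where x: "r = (l div gcd l m) ^ nat p * gcd l m * x" "s = (m div gcd l m) ^ nat p * gcd l m * x" by blast
    have "bs_eq l m (bpow (- int (nat p)) @ apow ((l div gcd l m) ^ nat p * gcd l m * x) @ bpow (int (nat p)))
       (apow ((m div gcd l m) ^ nat p * gcd l m * x))" by (rule conj_pow[OF l m])
    then show ?thesis using 2 x by simp
  next
    case 3
    then obtain x where x: "r = (m div gcd l m) ^ nat (-p) * gcd l m * x" "s = (l div gcd l m) ^ nat (-p) * gcd l m * x" by blast
    have "bs_eq l m (bpow (- int (nat (-p))) @ apow ((l div gcd l m) ^ nat (-p) * gcd l m * x) @ bpow (int (nat (-p))))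
       (apow ((m div gcd l m) ^ nat (-p) * gcd l m * x))" by (rule conj_pow[OF l m])
    then have "bs_eq l m (winv (bpow (-p)) @ apow s @ bpow (-p)) (apow r)" using 3 x by simp
    from bs_eq.sym[OF conj_flip[OF this]] show ?thesis by simp
  qed
qed

context bsl begin

lemma main_fwd: assumes F: "bs_eq l m (apow r @ w) (w @ apow s)"
  shows "cond l m (bexp w) r s"
proof -
  define p where "p = bexp w"
  have q: "of_int r = cq powi p * of_int s"
  proof -
    have "actQ (apow r @ w) 0 = actQ (w @ apow s) 0" by (rule actQ_inv[OF F])
    then have "actQ w 0 + of_int r = actQ w (of_int s)" by (simp add: actQ_append actQ_apow)
    also have "\<dots> = actQ w 0 + cq powi p * of_int s" unfolding p_def by (rule actQ_lin)
    finally show ?thesis by simp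
  qed
  define y where "y = actT w []"
  have ny: "nf y" unfolding y_def by (rule actT_nf) simp
  have hy: "ht y = p" unfolding y_def p_def using ht_actT[of w "[]"] by simp
  have fy: "acta r y = y"
  proof -
    have "actT (apow r @ w) [] = actT (w @ apow s) []" by (rule actT_inv[OF F]) simp
    then show ?thesis using ny by (simp add: actT_append actT_apow y_def)
  qed
  have gl: "gcd m l = gcd l m" by (rule gcd.commute)
  consider "p = 0" | "p > 0" | "p < 0" by linarith
  then show ?thesis
  proof cases
    case 1 then show ?thesis using q by (simp add: cond_def p_def)
  next
    case 2
    define n where "n = nat p"
    have n1: "n \<ge> 1" using 2 by (simp add: n_def)
    have pn: "p = int n" using 2 by (simp add: n_def)
    have "of_int r = (of_int l / of_int m) ^ n * (of_int s :: rat)" using q pn by (simp add: cq_def)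
    then have "of_int r * (of_int m) ^ n = (of_int l) ^ n * (of_int s :: rat)" using mpos by (simp add: field_simps power_divide)
    then have "of_int (r * m ^ n) = (of_int (s * l ^ n) :: rat)" by (simp add: algebra_simps)
    then have e: "r * m ^ n = s * l ^ n" by (simp only: of_int_eq_iff)
    have d1: "l dvd r" using fix_up[OF ny fy, of 0] hy 2 by simp
    have d2: "l ^ n dvd r * m ^ (n - 1)" using fix_up[OF ny fy, of "n - 1"] hy pn n1 by simp
    obtain x where "r = (l div gcd l m) ^ n * gcd l m * x \<and> s = (m div gcd l m) ^ n * gcd l m * x"
      using nt[OF lnz _ n1 e d1 d2] mpos by auto
    then show ?thesis using 2 by (auto simp: cond_def p_def n_def)
  next
    case 3
    define n where "n = nat (- p)"
    have n1: "n \<ge> 1" using 3 by (simp add: n_def)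
    have pn: "p = - int n" using 3 by (simp add: n_def)
    have "cq powi p = (of_int m / of_int l) ^ n" using pn by (simp add: cq_def power_int_def power_inverse)
    then have "of_int r = (of_int m / of_int l) ^ n * (of_int s :: rat)" using q by simp
    then have "of_int r * (of_int l) ^ n = (of_int m) ^ n * (of_int s :: rat)" using lnz by (simp add: field_simps power_divide)
    then have "of_int (r * l ^ n) = (of_int (s * m ^ n) :: rat)" by (simp add: algebra_simps)
    then have e: "r * l ^ n = s * m ^ n" by (simp only: of_int_eq_iff)
    have d1: "m dvd r" using fix_down[OF ny fy, of 0] hy 3 by simp
    have d2: "m ^ n dvd r * l ^ (n - 1)" using fix_down[OF ny fy, of "n - 1"] hy pn n1 by simp
    obtain x where "r = (m div gcd m l) ^ n * gcd m l * x \<and> s = (l div gcd m l) ^ n * gcd m l * x"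
      using nt[OF _ lnz n1 e d1 d2] mpos by auto
    then show ?thesis using 3 gl by (auto simp: cond_def p_def n_def)
  qed
qed

lemma main: assumes hv: "bs_eq l m h (bpow p @ v)" and bv: "bexp v = 0"
  shows "bs_eq l m (winv h @ apow r @ h) (apow s) \<longleftrightarrow>
     in_centralizer l m (apow s) v \<and> cond l m p r s"
proof
  assume E: "bs_eq l m (winv h @ apow r @ h) (apow s)"
  define w where "w = bpow p @ v"
  have E1: "bs_eq l m (winv v @ bpow (-p) @ apow r @ bpow p @ v) (apow s)"
    using bs_eq.trans[OF bs_eq.sym[OF conj_h[OF hv]] E] .
  have E2: "bs_eq l m (winv w @ apow r @ w) (apow s)" using E1 by (simp add: w_def)
  have "bs_eq l m (apow r @ w) (w @ winv w @ apow r @ w)"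
    using bs_ins[OF inv_right[of l m w], of "[]" "apow r @ w"] by simp
  also have "bs_eq l m (w @ winv w @ apow r @ w) (w @ apow s)" using bs_congL[OF E2] .
  finally have F: "bs_eq l m (apow r @ w) (w @ apow s)" .
  have bw: "bexp w = p" using bv by (simp add: w_def bexp_append bexp_bpow)
  have C: "cond l m p r s" using main_fwd[OF F] bw by simp
  have G: "bs_eq l m (winv v @ bpow (-p) @ apow r @ bpow p @ v) (winv v @ apow s @ v)"
    using bs_cong[OF cond_conj[OF C], of "winv v" v] by simp
  have "bs_eq l m (winv v @ apow s @ v) (apow s)" using bs_eq.trans[OF bs_eq.sym[OF G] E1] .
  then have CF: "bs_eq l m (apow s) (v @ apow s @ winv v)" by (rule conj_flip)
  have "bs_eq l m (apow s @ v) (v @ apow s @ winv v @ v)" using bs_congR[OF CF, of v] by simp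
  also have "bs_eq l m (v @ apow s @ winv v @ v) (v @ apow s)"
    using bs_cong[OF inv_left[of l m v], of "v @ apow s" "[]"] by simp
  finally have "bs_eq l m (v @ apow s) (apow s @ v)" by (rule bs_eq.sym)
  then show "in_centralizer l m (apow s) v \<and> cond l m p r s" using C by (simp add: in_centralizer_def)
next
  assume A: "in_centralizer l m (apow s) v \<and> cond l m p r s"
  have "bs_eq l m (winv h @ apow r @ h) (winv v @ bpow (-p) @ apow r @ bpow p @ v)" by (rule conj_h[OF hv])
  also have "bs_eq l m (winv v @ bpow (-p) @ apow r @ bpow p @ v) (winv v @ apow s @ v)"
    using bs_cong[OF cond_conj[of l m p r s], of "winv v" v] A by simp
  also have "bs_eq l m (winv v @ apow s @ v) (winv v @ v @ apow s)"
  proof -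
    have cen: "bs_eq l m (apow s @ v) (v @ apow s)" using A bs_eq.sym unfolding in_centralizer_def by blast
    show ?thesis using bs_congL[OF cen, of "winv v"] by simp
  qed
  also have "bs_eq l m (winv v @ v @ apow s) (apow s)"
    using bs_congR[OF inv_left[of l m v], of "apow s"] by simp
  finally show "bs_eq l m (winv h @ apow r @ h) (apow s)" .
qed

end

theorem proposition1:
  fixes l m p r s :: int and h v :: word
  assumes "\<bar>l\<bar> > m" and "m > 0"
    and "bs_eq l m h (bpow p @ v)" and "bexp v = 0"
  shows "bs_eq l m (winv h @ apow r @ h) (apow s) \<longleftrightarrow>
     in_centralizer l m (apow s) v \<and>
     ((p = 0 \<and> r = s) \<or>
      (p > 0 \<and> (\<exists>x::int. r = (l div gcd l m) ^ nat p * gcd l m * x \<and>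
                          s = (m div gcd l m) ^ nat p * gcd l m * x)) \<or>
      (p < 0 \<and> (\<exists>x::int. r = (m div gcd l m) ^ nat (- p) * gcd l m * x \<and>
                          s = (l div gcd l m) ^ nat (- p) * gcd l m * x)))"
proof -
  interpret bsl l m using assms(1,2) by unfold_locales
  show ?thesis using main[OF assms(3,4), of r s] unfolding cond_def .
qed

end
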